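(* Let $x\in\mathbb{R}^d$ with $\|x\|_2=1$, let $\ket{x}=\sum_{i\in[d]}x_i\ket{i}$, and let $\delta>0$. Consider the following procedure, given access to a unitary $U:\ket{0}\mapsto\ket{x}$, its controlled version, and QRAM: (1) measure $N=\frac{36\ln d}{\delta^2}$ copies of $\ket{x}$ in the standard basis, let $n_i$ be the number of times outcome $i$ is observed, and store $\sqrt{p_i}=\sqrt{n_i/N}$ in QRAM; (2) create $N$ copies of the state $\frac{1}{\sqrt2}\ket{0}\sum_{i}x_i\ket{i}+\frac{1}{\sqrt2}\ket{1}\sum_i\sqrt{p_i}\ket{i}$; (3) apply a Hadamard gate to the first qubit of each copy, giving $\frac12\sum_i\big((x_i+\sqrt{p_i})\ket{0,i}+(x_i-\sqrt{p_i})\ket{1,i}\big)$; (4) measure both registers of each copy in the standard basis and let $n(0,i)$ be the number of times outcome $(0,i)$ is observed; (5) set $\sigma(i)=+1$ if $n(0,i)>0.4Np_i$ and $\sigma(i)=-1$ otherwise; (6) output the vector $\widetilde{X}$ with $\widetilde{X}_i=\sigma(i)\sqrt{p_i}$. Then, with probability at least $1-\frac{1}{d^{0.83}}$, $\|\widetilde{X}-x\|_\infty<(1+\sqrt2)\delta$.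
   Context: $\ket{i}$ denotes the standard basis vectors; $\|\cdot\|_\infty$ is the maximum absolute value of the coordinates; $\ln$ is the natural logarithm. *)

theory Defs
  imports "HOL-Probability.Probability"
begin

text \<open>Basis indices [d] are represented by the naturals 0..d-1; a vector of R^d by a
  function nat => real, only its values on {..<d} being relevant.\<close>

definition linf_norm :: "nat \<Rightarrow> (nat \<Rightarrow> real) \<Rightarrow> real" where
  "linf_norm d v = Max ((\<lambda>i. \<bar>v i\<bar>) ` {..<d})"

text \<open>Standard-basis measurement of |x> = sum_i x_i |i>: outcome i with probability x_i^2.\<close>
definition meas1 :: "nat \<Rightarrow> (nat \<Rightarrow> real) \<Rightarrow> nat pmf" where
  "meas1 d x = embed_pmf (\<lambda>i. if i < d then (x i)^2 else 0)"

text \<open>Measurement of (1/2) sum_i ((x_i + sqrt p_i)|0,i> + (x_i - sqrt p_i)|1,i>)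
  in the standard basis; the qubit value 0 is False, 1 is True.\<close>
definition meas2 :: "nat \<Rightarrow> (nat \<Rightarrow> real) \<Rightarrow> (nat \<Rightarrow> real) \<Rightarrow> (bool \<times> nat) pmf" where
  "meas2 d x sp = embed_pmf (\<lambda>(b, i). if i < d then
      (if b then ((x i - sp i) / 2)^2 else ((x i + sp i) / 2)^2) else 0)"

definition num_copies :: "nat \<Rightarrow> real \<Rightarrow> nat" where
  "num_copies d \<delta> = nat \<lceil>36 * ln (real d) / \<delta>^2\<rceil>"

definition tomography :: "nat \<Rightarrow> (nat \<Rightarrow> real) \<Rightarrow> real \<Rightarrow> (nat \<Rightarrow> real) pmf" where
  "tomography d x \<delta> = (let N = num_copies d \<delta> in
     do {
       s1 \<leftarrow> Pi_pmf {..<N} 0 (\<lambda>_. meas1 d x);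
       let p = (\<lambda>i. real (card {k \<in> {..<N}. s1 k = i}) / real N);
       s2 \<leftarrow> Pi_pmf {..<N} (False, 0) (\<lambda>_. meas2 d x (\<lambda>i. sqrt (p i)));
       let n0 = (\<lambda>i. real (card {k \<in> {..<N}. s2 k = (False, i)}));
       let \<sigma> = (\<lambda>i. if n0 i > 0.4 * real N * p i then (1::real) else -1);
       return_pmf (\<lambda>i. \<sigma> i * sqrt (p i))
     })"

end

theory Submission
  imports Defs
begin


lemma prob_bind_le:
  fixes M :: "'a pmf" and N :: "'a \<Rightarrow> 'b pmf"
  assumes "\<And>x. x \<in> set_pmf M \<Longrightarrow> x \<notin> B \<Longrightarrow> measure_pmf.prob (N x) X \<le> c" "c \<ge> 0"
  shows "measure_pmf.prob (bind_pmf M N) X \<le> measure_pmf.prob M B + c"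
proof -
  have "emeasure (measure_pmf (bind_pmf M N)) X = (\<integral>\<^sup>+x. emeasure (measure_pmf (N x)) X \<partial>M)" by simp
  also have "\<dots> \<le> (\<integral>\<^sup>+x. (indicator B x + ennreal c) \<partial>M)"
  proof (rule nn_integral_mono_AE, rule AE_pmfI)
    fix x assume x: "x \<in> set_pmf M"
    show "emeasure (measure_pmf (N x)) X \<le> indicator B x + ennreal c"
    proof (cases "x \<in> B")
      case True
      have "emeasure (measure_pmf (N x)) X \<le> 1" by (simp add: measure_pmf.emeasure_le_1)
      also have "\<dots> \<le> indicator B x + ennreal c" using True by simp
      finally show ?thesis .
    next
      case False
      then show ?thesis using assms(1)[OF x False] assms(2)
        by (simp add: measure_pmf.emeasure_eq_measure)
    qed
  qed
  also have "\<dots> = emeasure M B + ennreal c"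
    by (subst nn_integral_add) (auto simp: measure_pmf.emeasure_space_1)
  also have "\<dots> = ennreal (measure_pmf.prob M B + c)"
    using assms(2) by (simp add: measure_pmf.emeasure_eq_measure ennreal_plus)
  finally have "ennreal (measure_pmf.prob (bind_pmf M N) X) \<le> ennreal (measure_pmf.prob M B + c)"
    by (simp add: measure_pmf.emeasure_eq_measure)
  then show ?thesis
    using assms(2) by (subst (asm) ennreal_le_iff) auto
qed

lemma card_filter_sum: "finite A \<Longrightarrow> real (card {k\<in>A. Q k}) = (\<Sum>k\<in>A. if Q k then 1 else 0)"
  by (simp add: sum.If_cases Int_def)

lemma exp_card_prod:
  assumes "finite A"
  shows "exp (l * real (card {k\<in>A. Q k})) = (\<Prod>k\<in>A. if Q k then exp l else 1)"
proof -
  have "exp (l * real (card {k\<in>A. Q k})) = exp (\<Sum>k\<in>A. l * (if Q k then 1 else 0))"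
    using assms by (simp add: card_filter_sum sum_distrib_left)
  also have "\<dots> = (\<Prod>k\<in>A. exp (l * (if Q k then 1 else 0)))" using assms by (simp add: exp_sum)
  also have "\<dots> = (\<Prod>k\<in>A. if Q k then exp l else 1)" by (intro prod.cong) auto
  finally show ?thesis .
qed

lemma mgf_bound:
  fixes p :: "'a pmf" and A :: "'b set"
  assumes "finite A"
  shows "measure_pmf.expectation (Pi_pmf A dflt (\<lambda>_. p)) (\<lambda>f. exp (l * real (card {k\<in>A. P (f k)})))
     \<le> exp (real (card A) * measure_pmf.prob p {y. P y} * (exp l - 1))"
proof -
  define q where "q = measure_pmf.prob p {y. P y}"
  have q01: "0 \<le> q" "q \<le> 1" unfolding q_def by auto
  have int: "integrable (measure_pmf p) (\<lambda>y. if P y then exp l else 1)"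
    by (rule measure_pmf.integrable_const_bound[where B="exp l + 1"]) auto
  have e1: "measure_pmf.expectation p (\<lambda>y. if P y then exp l else 1) = 1 + q * (exp l - 1)"
  proof -
    have "(\<lambda>y. if P y then exp l else 1) = (\<lambda>y. 1 + (exp l - 1) * indicator {y. P y} y)"
      by (auto simp: indicator_def)
    then have "measure_pmf.expectation p (\<lambda>y. if P y then exp l else 1)
       = measure_pmf.expectation p (\<lambda>y. 1 + (exp l - 1) * indicator {y. P y} y)" by simp
    also have "\<dots> = 1 + (exp l - 1) * q"
    proof -
      have ii: "integrable (measure_pmf p) (indicator {y. P y} :: 'a \<Rightarrow> real)"
        by (rule integrable_real_indicator) (auto simp: measure_pmf.emeasure_eq_measure)
      have "measure_pmf.expectation p (\<lambda>y. 1 + (exp l - 1) * indicator {y. P y} y)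
          = measure_pmf.expectation p (\<lambda>_. 1) + measure_pmf.expectation p (\<lambda>y. (exp l - 1) * indicator {y. P y} y)"
        by (rule Bochner_Integration.integral_add) (use ii in auto)
      also have "\<dots> = 1 + (exp l - 1) * measure_pmf.expectation p (indicator {y. P y})"
        by simp
      also have "measure_pmf.expectation p (indicator {y. P y}) = q"
        unfolding q_def using Bochner_Integration.integral_indicator[of "measure_pmf p" "{y. P y}"] by simp
      finally show ?thesis .
    qed
    finally show ?thesis by (simp add: algebra_simps)
  qed
  have "measure_pmf.expectation (Pi_pmf A dflt (\<lambda>_. p)) (\<lambda>f. exp (l * real (card {k\<in>A. P (f k)})))
      = measure_pmf.expectation (Pi_pmf A dflt (\<lambda>_. p)) (\<lambda>f. \<Prod>k\<in>A. (\<lambda>k y. if P y then exp l else 1) k (f k))"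
    using assms by (simp add: exp_card_prod)
  also have "\<dots> = (\<Prod>k\<in>A. measure_pmf.expectation p (\<lambda>y. if P y then exp l else 1))"
    by (rule expectation_prod_Pi_pmf) (use assms int in auto)
  also have "\<dots> = (1 + q * (exp l - 1)) ^ card A" using e1 by simp
  also have "\<dots> \<le> exp (q * (exp l - 1)) ^ card A"
  proof (rule power_mono)
    show "1 + q * (exp l - 1) \<le> exp (q * (exp l - 1))" by (rule exp_ge_add_one_self)
    have "0 \<le> (1 - q) + q * exp l" using q01 by (simp add: add_nonneg_nonneg)
    then show "0 \<le> 1 + q * (exp l - 1)" by (simp add: algebra_simps)
  qed
  also have "\<dots> = exp (real (card A) * q * (exp l - 1))"
    by (simp add: exp_of_nat_mult[symmetric] mult.assoc)
  finally show ?thesis unfolding q_def .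
qed

lemma tail_core:
  fixes p :: "'a pmf" and A :: "'b set"
  assumes "finite A"
  shows "measure_pmf.prob (Pi_pmf A dflt (\<lambda>_. p)) {f. c \<le> l * real (card {k\<in>A. P (f k)})}
     \<le> exp (- c + real (card A) * measure_pmf.prob p {y. P y} * (exp l - 1))"
proof -
  let ?M = "Pi_pmf A dflt (\<lambda>_. p)"
  let ?S = "\<lambda>f. real (card {k\<in>A. P (f k)})"
  let ?E = "{f. c \<le> l * ?S f}"
  have Sle: "?S f \<le> real (card A)" for f
    using assms by (simp add: card_mono)
  have int: "integrable (measure_pmf ?M) (\<lambda>f. exp (l * ?S f))"
  proof (rule measure_pmf.integrable_const_bound[where B="exp (\<bar>l\<bar> * real (card A))"])
    show "AE f in measure_pmf ?M. norm (exp (l * ?S f)) \<le> exp (\<bar>l\<bar> * real (card A))"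
    proof (rule AE_pmfI)
      fix f
      have "l * ?S f \<le> \<bar>l\<bar> * ?S f" by (simp add: mult_right_mono)
      also have "\<dots> \<le> \<bar>l\<bar> * real (card A)" using Sle[of f] by (simp add: mult_left_mono)
      finally show "norm (exp (l * ?S f)) \<le> exp (\<bar>l\<bar> * real (card A))" by simp
    qed
  qed simp
  have "measure_pmf.prob ?M ?E = measure_pmf.expectation ?M (indicator ?E)"
    by simp
  also have "\<dots> \<le> measure_pmf.expectation ?M (\<lambda>f. exp (- c) * exp (l * ?S f))"
  proof (rule integral_mono)
    show "integrable (measure_pmf ?M) (indicator ?E :: _ \<Rightarrow> real)"
      by (rule integrable_real_indicator) (auto simp: measure_pmf.emeasure_eq_measure)
    show "integrable (measure_pmf ?M) (\<lambda>f. exp (- c) * exp (l * ?S f))"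
      using int by simp
    fix f
    show "indicator ?E f \<le> exp (- c) * exp (l * ?S f)"
    proof (cases "f \<in> ?E")
      case True
      then have "0 \<le> - c + l * ?S f" by simp
      then have "1 \<le> exp (- c + l * ?S f)" by simp
      then have "1 \<le> exp (- c) * exp (l * ?S f)" by (simp add: exp_add[symmetric])
      then show ?thesis using True by simp
    qed (simp)
  qed
  also have "\<dots> = exp (- c) * measure_pmf.expectation ?M (\<lambda>f. exp (l * ?S f))"
    by simp
  also have "\<dots> \<le> exp (- c) * exp (real (card A) * measure_pmf.prob p {y. P y} * (exp l - 1))"
    by (rule mult_left_mono) (use mgf_bound[OF assms] in auto)
  also have "\<dots> = exp (- c + real (card A) * measure_pmf.prob p {y. P y} * (exp l - 1))"
    by (simp only: exp_add)
  finally show ?thesis .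
qed

lemma tail_upper:
  fixes p :: "'a pmf" and A :: "'b set"
  assumes "finite A" "l \<ge> 0"
  shows "measure_pmf.prob (Pi_pmf A dflt (\<lambda>_. p)) {f. a \<le> real (card {k\<in>A. P (f k)})}
     \<le> exp (- l * a + real (card A) * measure_pmf.prob p {y. P y} * (exp l - 1))"
proof -
  have "measure_pmf.prob (Pi_pmf A dflt (\<lambda>_. p)) {f. a \<le> real (card {k\<in>A. P (f k)})}
     \<le> measure_pmf.prob (Pi_pmf A dflt (\<lambda>_. p)) {f. l * a \<le> l * real (card {k\<in>A. P (f k)})}"
    by (rule measure_pmf.finite_measure_mono) (auto intro: mult_left_mono assms)
  also have "\<dots> \<le> exp (- (l * a) + real (card A) * measure_pmf.prob p {y. P y} * (exp l - 1))"
    by (rule tail_core[OF assms(1)])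
  finally show ?thesis by simp
qed

lemma tail_lower:
  fixes p :: "'a pmf" and A :: "'b set"
  assumes "finite A" "l \<ge> 0"
  shows "measure_pmf.prob (Pi_pmf A dflt (\<lambda>_. p)) {f. real (card {k\<in>A. P (f k)}) \<le> b}
     \<le> exp (l * b + real (card A) * measure_pmf.prob p {y. P y} * (exp (- l) - 1))"
proof -
  have "measure_pmf.prob (Pi_pmf A dflt (\<lambda>_. p)) {f. real (card {k\<in>A. P (f k)}) \<le> b}
     \<le> measure_pmf.prob (Pi_pmf A dflt (\<lambda>_. p)) {f. - l * b \<le> - l * real (card {k\<in>A. P (f k)})}"
    by (rule measure_pmf.finite_measure_mono) (auto intro: mult_left_mono assms)
  also have "\<dots> \<le> exp (- (- l * b) + real (card A) * measure_pmf.prob p {y. P y} * (exp (- l) - 1))"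
    by (rule tail_core[OF assms(1)])
  finally show ?thesis by simp
qed



lemma exp_neg_le: fixes l :: real assumes "l \<ge> 0" shows "exp (- l) \<le> 1 - l + l^2/2"
proof -
  obtain t where t: "exp (- l) = (\<Sum>m<3. ((- l) ^ m) / fact m) + (exp t / fact 3) * (- l) ^ 3"
    using Maclaurin_exp_le[of "- l" 3] by blast
  have "(exp t / fact 3) * (- l) ^ 3 \<le> 0"
    using assms by (simp add: mult_nonneg_nonpos)
  moreover have "(\<Sum>m<3. ((- l) ^ m) / fact m) = 1 - l + l^2/2"
    by (simp add: numeral_3_eq_3 power2_eq_square)
  ultimately show ?thesis using t by linarith
qed

lemma ln_ge_1_minus_inv: fixes r :: real assumes "r > 0" shows "ln r \<ge> 1 - 1 / r"
proof -
  have "ln (1 / r) \<le> 1 / r - 1" using assms by (intro ln_le_minus_one) simp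
  then show ?thesis using assms by (simp add: ln_div)
qed

lemma lower_tail:
  fixes p :: "'a pmf" and A :: "'b set"
  assumes "finite A" and mu: "mu = real (card A) * measure_pmf.prob p {y. P y}" "mu > 0" "b \<le> mu"
  shows "measure_pmf.prob (Pi_pmf A dflt (\<lambda>_. p)) {f. real (card {k\<in>A. P (f k)}) \<le> b}
     \<le> exp (- ((mu - b)^2 / (2 * mu)))"
proof -
  define l where "l = (mu - b) / mu"
  have l0: "l \<ge> 0" using mu unfolding l_def by simp
  have "measure_pmf.prob (Pi_pmf A dflt (\<lambda>_. p)) {f. real (card {k\<in>A. P (f k)}) \<le> b}
     \<le> exp (l * b + mu * (exp (- l) - 1))"
    using tail_lower[OF assms(1) l0, of dflt p P b] mu(1) by simp
  also have "\<dots> \<le> exp (l * b + mu * (- l + l^2/2))"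
    using exp_neg_le[OF l0] mu(2) by (simp add: mult_left_mono)
  also have "l * b + mu * (- l + l^2/2) = - ((mu - b)^2 / (2 * mu))"
    using mu(2) unfolding l_def by (simp add: field_simps power2_eq_square)
  finally show ?thesis .
qed



lemma pmf_meas1:
  assumes "(\<Sum>i<d. (x i)^2) = 1"
  shows "pmf (meas1 d x) i = (if i < d then (x i)^2 else 0)"
proof -
  have "(\<integral>\<^sup>+i. ennreal (if i < d then (x i)^2 else 0) \<partial>count_space UNIV)
      = (\<Sum>i\<in>{..<d}. ennreal (if i < d then (x i)^2 else 0))"
    by (rule nn_integral_count_space') auto
  also have "\<dots> = ennreal (\<Sum>i<d. (x i)^2)"
    by (subst sum_ennreal[symmetric]) auto
  finally have "(\<integral>\<^sup>+i. ennreal (if i < d then (x i)^2 else 0) \<partial>count_space UNIV) = 1"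
    using assms by simp
  then show ?thesis unfolding meas1_def
    by (subst pmf_embed_pmf) auto
qed

lemma pmf_meas2:
  assumes "(\<Sum>i<d. (x i)^2) = 1" "(\<Sum>i<d. (sp i)^2) = 1"
  shows "pmf (meas2 d x sp) (b, i) = (if i < d then
      (if b then ((x i - sp i) / 2)^2 else ((x i + sp i) / 2)^2) else 0)"
proof -
  let ?f = "\<lambda>(b, i). if i < d then
      (if b then ((x i - sp i) / 2)^2 else ((x i + sp i) / 2)^2) else (0::real)"
  have "(\<integral>\<^sup>+z. ennreal (?f z) \<partial>count_space UNIV)
      = (\<Sum>z\<in>UNIV \<times> {..<d}. ennreal (?f z))"
    by (rule nn_integral_count_space') (auto split: if_splits)
  also have "\<dots> = ennreal (\<Sum>z\<in>UNIV \<times> {..<d}. ?f z)"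
    by (subst sum_ennreal[symmetric]) (auto split: prod.splits)
  also have "(\<Sum>z\<in>UNIV \<times> {..<d}. ?f z) = (\<Sum>i<d. ((x i)^2 + (sp i)^2) / 2)"
  proof -
    have "(\<Sum>z\<in>UNIV \<times> {..<d}. ?f z) = (\<Sum>b\<in>UNIV. \<Sum>i<d. ?f (b, i))"
      by (subst sum.cartesian_product) simp
    also have "\<dots> = (\<Sum>i<d. ((x i - sp i) / 2)^2 + ((x i + sp i) / 2)^2)"
      by (simp add: UNIV_bool sum.distrib add.commute)
    also have "\<dots> = (\<Sum>i<d. ((x i)^2 + (sp i)^2) / 2)"
      by (intro sum.cong refl) (simp add: power2_eq_square field_simps)
    finally show ?thesis .
  qed
  also have "\<dots> = 1"
    using assms by (simp add: sum.distrib sum_divide_distrib[symmetric])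
  finally have "(\<integral>\<^sup>+z. ennreal (?f z) \<partial>count_space UNIV) = 1" by simp
  then show ?thesis unfolding meas2_def
    by (subst pmf_embed_pmf) (auto split: prod.splits)
qed

lemma sum_counts:
  fixes d N :: nat and s1 :: "nat \<Rightarrow> nat"
  assumes "\<And>k. k < N \<Longrightarrow> s1 k < d"
  shows "(\<Sum>i<d. real (card {k\<in>{..<N}. s1 k = i})) = real N"
proof -
  have "(\<Sum>i<d. real (card {k\<in>{..<N}. s1 k = i})) = (\<Sum>i<d. \<Sum>k<N. if s1 k = i then 1 else 0)"
    by (intro sum.cong refl) (simp only: card_filter_sum[OF finite_lessThan])
  also have "\<dots> = (\<Sum>k<N. \<Sum>i<d. if s1 k = i then 1 else 0)"
    by (rule sum.swap)
  also have "\<dots> = (\<Sum>k<N. 1)"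
  proof (intro sum.cong refl)
    fix k assume "k \<in> {..<N}"
    then have "s1 k \<in> {..<d}" using assms by auto
    then show "(\<Sum>i<d. if s1 k = i then 1 else (0::real)) = 1"
      by simp
  qed
  finally show ?thesis by simp
qed

lemma tomography_alt:
  "tomography d x \<delta> = bind_pmf (Pi_pmf {..<num_copies d \<delta>} 0 (\<lambda>_. meas1 d x))
    (\<lambda>s1. map_pmf (\<lambda>s2 i. (if real (card {k \<in> {..<num_copies d \<delta>}. s2 k = (False, i)}) >
          0.4 * real (num_copies d \<delta>) * (real (card {k \<in> {..<num_copies d \<delta>}. s1 k = i}) / real (num_copies d \<delta>))
          then (1::real) else -1) * sqrt (real (card {k \<in> {..<num_copies d \<delta>}. s1 k = i}) / real (num_copies d \<delta>)))
      (Pi_pmf {..<num_copies d \<delta>} (False, 0) (\<lambda>_. meas2 d x (\<lambda>i. sqrt (real (card {k \<in> {..<num_copies d \<delta>}. s1 k = i}) / real (num_copies d \<delta>))))))"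
  unfolding tomography_def Let_def map_pmf_def by simp



lemma upper1:
  fixes p :: "'a pmf" and A :: "'b set"
  assumes "finite A" "measure_pmf.prob p {y. P y} = u^2" "u \<ge> 0" "e > 0"
  shows "measure_pmf.prob (Pi_pmf A dflt (\<lambda>_. p))
     {f. real (card A) * (u + e)^2 \<le> real (card {k\<in>A. P (f k)})} \<le> exp (- (real (card A) * e^2))"
proof (cases "u = 0")
  case True
  show ?thesis
    using tail_upper[OF assms(1), of 1 dflt p "real (card A) * (u + e)^2" P] assms(2) True by simp
next
  case False
  then have u: "u > 0" using assms by simp
  define r where "r = (u + e) / u"
  have r1: "r \<ge> 1" using u assms unfolding r_def by simp
  define l where "l = 2 * ln r"
  have l0: "l \<ge> 0" using r1 unfolding l_def by simp
  have el: "exp l = r^2" proof -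
    have "exp l = exp (ln r + ln r)" unfolding l_def by (simp only: mult_2)
    also have "\<dots> = exp (ln r) * exp (ln r)" by (simp only: exp_add)
    also have "\<dots> = r * r" using r1 by simp
    finally show ?thesis by (simp add: power2_eq_square)
  qed
  have lr: "ln r \<ge> e / (u + e)"
    using ln_ge_1_minus_inv[of r] r1 u assms unfolding r_def by (simp add: field_simps)
  define N where "N = real (card A)"
  have N0: "N \<ge> 0" unfolding N_def by simp
  have ur: "u^2 * (r^2 - 1) = 2 * u * e + e^2"
    using u unfolding r_def by (simp add: field_simps power2_eq_square)
  have "- l * (N * (u + e)^2) \<le> - (2 * (e / (u + e))) * (N * (u + e)^2)"
    unfolding l_def using lr N0 by (intro mult_right_mono) auto
  also have "\<dots> = - 2 * e * N * (u + e)"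
    using u assms by (simp add: field_simps power2_eq_square)
  finally have h: "- l * (N * (u + e)^2) \<le> - 2 * e * N * (u + e)" .
  have "measure_pmf.prob (Pi_pmf A dflt (\<lambda>_. p))
     {f. N * (u + e)^2 \<le> real (card {k\<in>A. P (f k)})} \<le> exp (- l * (N * (u + e)^2) + N * u^2 * (exp l - 1))"
    using tail_upper[OF assms(1) l0, of dflt p "N * (u + e)^2" P] assms(2) unfolding N_def by simp
  also have "\<dots> \<le> exp (- (N * e^2))"
  proof -
    have "N * u^2 * (exp l - 1) = N * (2 * u * e + e^2)" using ur el by simp
    then have "- l * (N * (u + e)^2) + N * u^2 * (exp l - 1) \<le> - (N * e^2)"
      using h by (simp add: algebra_simps power2_eq_square)
    then show ?thesis by simp
  qed
  finally show ?thesis unfolding N_def .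
qed

lemma lower1:
  fixes p :: "'a pmf" and A :: "'b set"
  assumes "finite A" "measure_pmf.prob p {y. P y} = u^2" "e > 0" "u \<ge> e" "card A > 0"
  shows "measure_pmf.prob (Pi_pmf A dflt (\<lambda>_. p))
     {f. real (card {k\<in>A. P (f k)}) \<le> real (card A) * (u - e)^2} \<le> exp (- (real (card A) * e^2 / 2))"
proof -
  define N where "N = real (card A)"
  have N0: "N > 0" unfolding N_def using assms by simp
  have u: "u > 0" using assms by simp
  define mu where "mu = N * u^2"
  have mu0: "mu > 0" unfolding mu_def using N0 u by simp
  have d: "mu - N * (u - e)^2 = N * e * (2 * u - e)"
    unfolding mu_def by (simp add: algebra_simps power2_eq_square)
  have d2: "N * e * (2 * u - e) \<ge> N * e * u"
    using N0 assms by (intro mult_left_mono) auto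
  have dd: "(mu - N * (u - e)^2)^2 \<ge> (N * e * u)^2"
    unfolding d using d2 N0 assms u by (intro power_mono) auto
  have "measure_pmf.prob (Pi_pmf A dflt (\<lambda>_. p))
     {f. real (card {k\<in>A. P (f k)}) \<le> N * (u - e)^2} \<le> exp (- ((mu - N * (u - e)^2)^2 / (2 * mu)))"
    by (rule lower_tail[OF assms(1)]) (use mu0 assms(2) d d2 N0 assms in \<open>auto simp: mu_def N_def\<close>)
  also have "\<dots> \<le> exp (- (N * e^2 / 2))"
  proof -
    have "(N * e * u)^2 / (2 * mu) = N * e^2 / 2"
      unfolding mu_def using N0 u by (simp add: field_simps power2_eq_square)
    moreover have "(N * e * u)^2 / (2 * mu) \<le> (mu - N * (u - e)^2)^2 / (2 * mu)"
      using dd mu0 by (intro divide_right_mono) auto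
    ultimately show ?thesis by simp
  qed
  finally show ?thesis unfolding N_def .
qed



lemma signA:
  fixes Nr \<delta> L u s :: real
  assumes "Nr > 0" "\<delta> > 0" "Nr * \<delta>^2 \<ge> 36 * L" "L \<ge> 0" "u \<ge> 0" "s \<ge> 0" "s < u + \<delta>/3" "u + s \<ge> 2.4 * \<delta>"
  shows "0.4 * Nr * s^2 \<le> Nr * ((u+s)/2)^2" "Nr * ((u+s)/2)^2 > 0"
    "4 * L \<le> (Nr * ((u+s)/2)^2 - 0.4 * Nr * s^2)^2 / (2 * (Nr * ((u+s)/2)^2))"
proof -
  define w where "w = (u + s) / 2"
  have w: "w \<ge> (6/5) * \<delta>" unfolding w_def using assms by simp
  have sw: "s \<le> (57/50) * w" unfolding w_def using assms w_def w by simp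
  have s2: "s^2 \<le> ((57/50) * w)^2" using sw assms by (intro power_mono) auto
  have "((57/50) * w)^2 = (3249/2500) * w^2" by (simp add: power2_eq_square)
  then have "0.4 * s^2 \<le> (13/25) * w^2" using s2 zero_le_power2[of w] by linarith
  then have b: "0.4 * Nr * s^2 \<le> (13/25) * (Nr * w^2)"
    using assms(1) mult_left_mono[of "0.4 * s^2" "(13/25) * w^2" Nr] by (simp add: algebra_simps)
  have mu: "Nr * w^2 > 0" using w assms by simp
  have mu2: "Nr * w^2 \<ge> (36/25) * (Nr * \<delta>^2)"
  proof -
    have "w^2 \<ge> ((6/5) * \<delta>)^2" using w assms by (intro power_mono) auto
    then have "w^2 \<ge> (36/25) * \<delta>^2" by (simp add: power2_eq_square)
    then show ?thesis using assms(1) mult_left_mono[of "(36/25) * \<delta>^2" "w^2" Nr] by (simp add: algebra_simps)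
  qed
  have diff: "Nr * w^2 - 0.4 * Nr * s^2 \<ge> (12/25) * (Nr * w^2)" using b by simp
  have "(Nr * w^2 - 0.4 * Nr * s^2)^2 \<ge> ((12/25) * (Nr * w^2))^2"
    using diff mu by (intro power_mono) auto
  then have "(Nr * w^2 - 0.4 * Nr * s^2)^2 / (2 * (Nr * w^2)) \<ge> ((12/25) * (Nr * w^2))^2 / (2 * (Nr * w^2))"
    using mu by (intro divide_right_mono) auto
  moreover have "((12/25) * (Nr * w^2))^2 / (2 * (Nr * w^2)) = (72/625) * (Nr * w^2)"
    using mu by (simp add: power2_eq_square)
  ultimately have "(Nr * w^2 - 0.4 * Nr * s^2)^2 / (2 * (Nr * w^2)) \<ge> (72/625) * (Nr * w^2)" by simp
  moreover have "(72/625) * (Nr * w^2) \<ge> 4 * L" using mu2 assms(3) mu by linarith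
  ultimately show "4 * L \<le> (Nr * ((u+s)/2)^2 - 0.4 * Nr * s^2)^2 / (2 * (Nr * ((u+s)/2)^2))"
    unfolding w_def by simp
  show "0.4 * Nr * s^2 \<le> Nr * ((u+s)/2)^2" using b mu unfolding w_def by simp
  show "Nr * ((u+s)/2)^2 > 0" using mu unfolding w_def .
qed

lemma signB:
  fixes Nr \<delta> L u s :: real
  assumes "Nr > 0" "\<delta> > 0" "Nr * \<delta>^2 \<ge> 36 * L" "L \<ge> 0" "u \<ge> 0" "s \<ge> 0" "\<bar>s - u\<bar> < \<delta>/2" "u + s \<ge> 2.4 * \<delta>"
  shows "- (0.4 * Nr * s^2) + Nr * ((s - u)/2)^2 * 2 \<le> - (4 * L)"
proof -
  have s: "s \<ge> (19/20) * \<delta>" using assms(7,8) unfolding abs_less_iff by linarith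
  have s2: "s^2 \<ge> ((19/20) * \<delta>)^2" using s assms by (intro power_mono) auto
  have q: "((s - u)/2)^2 \<le> (\<delta>/4)^2"
  proof -
    have "\<bar>(s - u)/2\<bar> \<le> \<delta>/4" using assms by simp
    then have "\<bar>(s - u)/2\<bar>^2 \<le> (\<delta>/4)^2" by (intro power_mono) auto
    then show ?thesis by (simp only: power2_abs)
  qed
  have "0.4 * Nr * s^2 \<ge> 0.4 * Nr * ((19/20) * \<delta>)^2" using s2 assms(1) by simp
  moreover have "Nr * ((s - u)/2)^2 * 2 \<le> Nr * (\<delta>/4)^2 * 2" using q assms(1) by simp
  ultimately have "- (0.4 * Nr * s^2) + Nr * ((s - u)/2)^2 * 2 \<le> - (0.4 * Nr * ((19/20) * \<delta>)^2) + Nr * (\<delta>/4)^2 * 2"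
    by linarith
  also have "\<dots> = - ((59/250) * (Nr * \<delta>^2))" by (simp add: power_mult_distrib power_divide)
  also have "\<dots> \<le> - (4 * L)" using assms(3,4) by simp
  finally show ?thesis .
qed



lemma coord_bound:
  fixes d N :: nat and x :: "nat \<Rightarrow> real" and \<delta> L :: real and i :: nat
  assumes sq: "(\<Sum>i<d. (x i)^2) = 1" and \<delta>: "\<delta> > 0" and L: "L \<ge> 0" and NL: "real N * \<delta>^2 \<ge> 36 * L"
    and N0: "N > 0" and i: "i < d"
  defines "S1 \<equiv> \<lambda>s1 i. real (card {k\<in>{..<N}. s1 k = i})"
  defines "pf \<equiv> \<lambda>s1 i. S1 s1 i / real N"
  defines "F \<equiv> \<lambda>s1. map_pmf (\<lambda>s2 i. (if real (card {k \<in> {..<N}. s2 k = (False, i)}) >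
          0.4 * real N * pf s1 i then (1::real) else -1) * sqrt (pf s1 i))
      (Pi_pmf {..<N} (False, 0) (\<lambda>_. meas2 d x (\<lambda>i. sqrt (pf s1 i))))"
  shows "measure_pmf.prob (bind_pmf (Pi_pmf {..<N} 0 (\<lambda>_. meas1 d x)) F)
      {X. (1 + sqrt 2) * \<delta> \<le> \<bar>X i - x i\<bar>} \<le> 3 * exp (- (4 * L))"
proof -
  define K where "K = 1 + sqrt 2"
  have K: "K \<ge> 2.4"
  proof -
    have "1.4 \<le> sqrt 2" by (rule real_le_rsqrt) (simp add: power2_eq_square)
    then show ?thesis unfolding K_def by simp
  qed
  have Kd: "K * \<delta> \<ge> 2.4 * \<delta>" using K \<delta> by (intro mult_right_mono) auto
  define E where "E = exp (- (4 * L))"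
  have E0: "E \<ge> 0" unfolding E_def by simp
  define u where "u = \<bar>x i\<bar>"
  have u0: "u \<ge> 0" unfolding u_def by simp
  define P1 where "P1 = Pi_pmf {..<N} 0 (\<lambda>_. meas1 d x)"
  have q1: "measure_pmf.prob (meas1 d x) {y. y = i} = u^2"
    using pmf_meas1[OF sq, of i] i unfolding u_def by (simp add: measure_pmf_single)
  define up where "up = {s1. real N * (u + \<delta>/3)^2 \<le> S1 s1 i}"
  define low where "low = {s1. S1 s1 i \<le> real N * (u - \<delta>/2)^2 \<and> u \<ge> \<delta>/2}"
  have Nr: "real N > 0" using N0 by simp
  have pup: "measure_pmf.prob P1 up \<le> E"
  proof -
    have "measure_pmf.prob P1 up \<le> exp (- (real (card {..<N}) * (\<delta>/3)^2))"
      unfolding P1_def up_def S1_def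
      using upper1[of "{..<N}" "meas1 d x" "\<lambda>y. y = i" u "\<delta>/3" 0] q1 u0 \<delta> by simp
    also have "\<dots> \<le> E" unfolding E_def using NL by (simp add: power_divide)
    finally show ?thesis .
  qed
  have plow: "measure_pmf.prob P1 low \<le> E"
  proof (cases "u \<ge> \<delta>/2")
    case True
    have "measure_pmf.prob P1 low \<le> exp (- (real (card {..<N}) * (\<delta>/2)^2 / 2))"
      unfolding P1_def low_def S1_def
      using lower1[of "{..<N}" "meas1 d x" "\<lambda>y. y = i" u "\<delta>/2" 0] q1 True \<delta> N0 by simp
    also have "\<dots> \<le> E" unfolding E_def using NL L by (simp add: power_divide)
    finally show ?thesis .
  next
    case False
    then have "low = {}" unfolding low_def by auto
    then show ?thesis using E0 by simp
  qed
  have inner: "measure_pmf.prob (F s1) {X. (1 + sqrt 2) * \<delta> \<le> \<bar>X i - x i\<bar>} \<le> E"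
    if s1: "s1 \<in> set_pmf P1" "s1 \<notin> up \<union> low" for s1
  proof -
    have rng: "s1 k < d" if "k < N" for k
    proof -
      have "s1 k \<in> set_pmf (meas1 d x)"
        using s1(1) that unfolding P1_def by (auto simp: set_Pi_pmf PiE_dflt_def)
      then have "pmf (meas1 d x) (s1 k) \<noteq> 0" by (simp add: set_pmf_iff)
      then show ?thesis using pmf_meas1[OF sq, of "s1 k"] by (auto split: if_splits)
    qed
    have pf0: "pf s1 j \<ge> 0" for j unfolding pf_def S1_def by simp
    have sq2: "(\<Sum>j<d. (sqrt (pf s1 j))^2) = 1"
    proof -
      have "(\<Sum>j<d. (sqrt (pf s1 j))^2) = (\<Sum>j<d. S1 s1 j) / real N"
        using pf0 unfolding pf_def by (simp add: sum_divide_distrib)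
      also have "\<dots> = 1" unfolding S1_def using sum_counts[of N s1 d] rng Nr by simp
      finally show ?thesis .
    qed
    define s where "s = sqrt (pf s1 i)"
    have ss: "s^2 = pf s1 i" unfolding s_def by (rule real_sqrt_pow2[OF pf0])
    have s0: "s \<ge> 0" unfolding s_def using pf0[of i] by simp
    have sup: "s < u + \<delta>/3"
    proof -
      have "S1 s1 i < real N * (u + \<delta>/3)^2" using s1(2) unfolding up_def by auto
      then have "pf s1 i < (u + \<delta>/3)^2" unfolding pf_def using Nr by (simp add: field_simps)
      then have "s^2 < (u + \<delta>/3)^2" using ss by simp
      then show ?thesis using u0 \<delta> s0 by (simp add: power_less_imp_less_base)
    qed
    have slow: "s > u - \<delta>/2"
    proof (cases "u \<ge> \<delta>/2")
      case True
      have "S1 s1 i > real N * (u - \<delta>/2)^2" using s1(2) True unfolding low_def by auto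
      then have "pf s1 i > (u - \<delta>/2)^2" unfolding pf_def using Nr by (simp add: field_simps)
      then have "s^2 > (u - \<delta>/2)^2" using ss by simp
      then show ?thesis using True s0 by (meson le_less_linear power_mono not_less diff_ge_0_iff_ge)
    next
      case False
      then show ?thesis using s0 by simp
    qed
    have sabs: "\<bar>s - u\<bar> < \<delta>/2" using sup slow \<delta> unfolding abs_less_iff by linarith
    define P2 where "P2 = Pi_pmf {..<N} (False, 0) (\<lambda>_. meas2 d x (\<lambda>i. sqrt (pf s1 i)))"
    define n0 where "n0 = (\<lambda>s2. real (card {k \<in> {..<N}. s2 k = (False, i)}))"
    define g where "g = (\<lambda>s2. (if n0 s2 > 0.4 * real N * s^2 then (1::real) else -1) * s)"
    have q2: "measure_pmf.prob (meas2 d x (\<lambda>i. sqrt (pf s1 i))) {y. y = (False, i)} = ((x i + s)/2)^2"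
      using pmf_meas2[OF sq sq2, of False i] i unfolding s_def by (simp add: measure_pmf_single)
    have Fp: "measure_pmf.prob (F s1) {X. (1 + sqrt 2) * \<delta> \<le> \<bar>X i - x i\<bar>}
        = measure_pmf.prob P2 {s2. K * \<delta> \<le> \<bar>g s2 - x i\<bar>}"
      unfolding F_def P2_def g_def n0_def K_def ss by (simp add: vimage_def s_def)
    consider "x i = 0" | "x i > 0" | "x i < 0" by linarith
    then show ?thesis
    proof cases
      case 1
      have "\<bar>g s2 - x i\<bar> < K * \<delta>" for s2
      proof -
        have "\<bar>g s2 - x i\<bar> = s" using 1 s0 unfolding g_def by auto
        moreover have "u = 0" using 1 unfolding u_def by simp
        ultimately show ?thesis using sup Kd \<delta> by linarith
      qed
      then have "{s2. K * \<delta> \<le> \<bar>g s2 - x i\<bar>} = {}" by (auto simp: not_le[symmetric])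
      then show ?thesis using Fp E0 by simp
    next
      case 2
      then have ux: "u = x i" unfolding u_def by simp
      show ?thesis
      proof (cases "s + u < K * \<delta>")
        case True
        have "\<bar>g s2 - x i\<bar> < K * \<delta>" for s2
        proof (cases "n0 s2 > 0.4 * real N * s^2")
          case c: True
          then have "g s2 = s" unfolding g_def by simp
          then show ?thesis using True sabs Kd \<delta> s0 ux unfolding abs_less_iff by linarith
        next
          case c: False
          then have "g s2 = - s" unfolding g_def by simp
          then show ?thesis using True sabs Kd \<delta> s0 ux unfolding abs_less_iff by linarith
        qed
        then have "{s2. K * \<delta> \<le> \<bar>g s2 - x i\<bar>} = {}" by (auto simp: not_le[symmetric])
        then show ?thesis using Fp E0 by simp
      next
        case False
        have sub: "{s2. K * \<delta> \<le> \<bar>g s2 - x i\<bar>} \<subseteq> {s2. n0 s2 \<le> 0.4 * real N * s^2}"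
        proof (safe)
          fix s2 assume a: "K * \<delta> \<le> \<bar>g s2 - x i\<bar>"
          show "n0 s2 \<le> 0.4 * real N * s^2"
          proof (rule ccontr)
            assume "\<not> n0 s2 \<le> 0.4 * real N * s^2"
            then have "g s2 = s" unfolding g_def by simp
            then show False using a sabs Kd \<delta> s0 ux unfolding abs_less_iff by linarith
          qed
        qed
        have A: "0.4 * real N * s^2 \<le> real N * ((u+s)/2)^2" "real N * ((u+s)/2)^2 > 0"
          "4 * L \<le> (real N * ((u+s)/2)^2 - 0.4 * real N * s^2)^2 / (2 * (real N * ((u+s)/2)^2))"
          using signA[OF Nr \<delta> NL L u0 s0 sup] False Kd \<delta> by auto
        have "measure_pmf.prob P2 {s2. K * \<delta> \<le> \<bar>g s2 - x i\<bar>} \<le> measure_pmf.prob P2 {s2. n0 s2 \<le> 0.4 * real N * s^2}"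
          by (rule measure_pmf.finite_measure_mono[OF sub]) simp
        also have "\<dots> \<le> exp (- ((real N * ((u+s)/2)^2 - 0.4 * real N * s^2)^2 / (2 * (real N * ((u+s)/2)^2))))"
          unfolding P2_def n0_def
          by (rule lower_tail) (use A q2 ux in auto)
        also have "\<dots> \<le> E" unfolding E_def using A by simp
        finally show ?thesis using Fp by simp
      qed
    next
      case 3
      then have ux: "u = - x i" unfolding u_def by simp
      show ?thesis
      proof (cases "s + u < K * \<delta>")
        case True
        have "\<bar>g s2 - x i\<bar> < K * \<delta>" for s2
        proof (cases "n0 s2 > 0.4 * real N * s^2")
          case c: True
          then have "g s2 = s" unfolding g_def by simp
          then show ?thesis using True sabs Kd \<delta> s0 ux unfolding abs_less_iff by linarith
        next
          case c: False
          then have "g s2 = - s" unfolding g_def by simp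
          then show ?thesis using True sabs Kd \<delta> s0 ux unfolding abs_less_iff by linarith
        qed
        then have "{s2. K * \<delta> \<le> \<bar>g s2 - x i\<bar>} = {}" by (auto simp: not_le[symmetric])
        then show ?thesis using Fp E0 by simp
      next
        case False
        have sub: "{s2. K * \<delta> \<le> \<bar>g s2 - x i\<bar>} \<subseteq> {s2. 0.4 * real N * s^2 \<le> n0 s2}"
        proof (safe)
          fix s2 assume a: "K * \<delta> \<le> \<bar>g s2 - x i\<bar>"
          show "0.4 * real N * s^2 \<le> n0 s2"
          proof (rule ccontr)
            assume "\<not> 0.4 * real N * s^2 \<le> n0 s2"
            then have "g s2 = - s" unfolding g_def by simp
            then show False using a sabs Kd \<delta> s0 ux unfolding abs_less_iff by linarith
          qed
        qed
        have B: "- (0.4 * real N * s^2) + real N * ((s - u)/2)^2 * 2 \<le> - (4 * L)"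
          using signB[OF Nr \<delta> NL L u0 s0 sabs] False Kd \<delta> by auto
        have e1: "exp 1 - 1 \<le> (2::real)" using exp_le by simp
        have "measure_pmf.prob P2 {s2. K * \<delta> \<le> \<bar>g s2 - x i\<bar>} \<le> measure_pmf.prob P2 {s2. 0.4 * real N * s^2 \<le> n0 s2}"
          by (rule measure_pmf.finite_measure_mono[OF sub]) simp
        also have "\<dots> \<le> exp (- 1 * (0.4 * real N * s^2) + real (card {..<N}) * ((x i + s)/2)^2 * (exp 1 - 1))"
          unfolding P2_def n0_def
          using tail_upper[of "{..<N}" 1 "(False, 0)" "meas2 d x (\<lambda>i. sqrt (pf s1 i))" "0.4 * real N * s^2" "\<lambda>y. y = (False, i)"] q2
          by simp
        also have "\<dots> \<le> exp (- (0.4 * real N * s^2) + real N * ((s - u)/2)^2 * 2)"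
        proof -
          have "((x i + s)/2)^2 = ((s - u)/2)^2" using ux by (simp add: algebra_simps)
          moreover have "real N * ((s - u)/2)^2 * (exp 1 - 1) \<le> real N * ((s - u)/2)^2 * 2"
            using e1 Nr by (intro mult_left_mono) auto
          ultimately show ?thesis by simp
        qed
        also have "\<dots> \<le> E" unfolding E_def using B by simp
        finally show ?thesis using Fp by simp
      qed
    qed
  qed
  have "measure_pmf.prob (bind_pmf P1 F) {X. (1 + sqrt 2) * \<delta> \<le> \<bar>X i - x i\<bar>}
      \<le> measure_pmf.prob P1 (up \<union> low) + E"
    by (rule prob_bind_le) (use inner E0 in auto)
  also have "\<dots> \<le> measure_pmf.prob P1 up + measure_pmf.prob P1 low + E"
    using measure_subadditive[of up "measure_pmf P1" low] by (simp add: measure_pmf.emeasure_eq_measure)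
  also have "\<dots> \<le> 3 * E" using pup plow by simp
  finally show ?thesis unfolding P1_def E_def .
qed



lemma final_arith:
  fixes d :: nat assumes "d \<ge> 2"
  shows "real d * (3 * exp (- (4 * ln (real d)))) \<le> 1 / (real d powr 0.83)"
proof -
  have d0: "real d > 0" using assms by simp
  have e4: "exp (- (4 * ln (real d))) = 1 / real d ^ 4"
  proof -
    have "exp (4 * ln (real d)) = real d powr (real 4)" using d0 by (simp add: powr_def)
    also have "\<dots> = real d ^ 4" using d0 by (rule powr_realpow)
    finally show ?thesis by (simp add: exp_minus field_simps)
  qed
  have p: "real d powr 0.83 \<le> real d" using assms
    using powr_mono[of "0.83" 1 "real d"] by simp
  have d2: "real d ^ 2 \<ge> 4"
  proof -
    have "real d ^ 2 \<ge> 2 ^ 2" using assms by (intro power_mono) auto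
    then show ?thesis by simp
  qed
  have pp: "real d powr 0.83 > 0" using d0 by simp
  have "real d * (3 * (1 / real d ^ 4)) * real d powr 0.83 \<le> real d * (3 * (1 / real d ^ 4)) * real d"
    using p d0 by (intro mult_left_mono) auto
  also have "\<dots> = 3 / real d ^ 2" using d0 by (simp add: field_simps power2_eq_square power4_eq_xxxx)
  also have "\<dots> \<le> 1" using d2 by (simp add: divide_le_eq)
  finally have "real d * (3 * (1 / real d ^ 4)) * real d powr 0.83 \<le> 1" .
  then show ?thesis unfolding e4 using pp by (simp add: field_simps)
qed

theorem theorem9:
  fixes d :: nat and x :: "nat \<Rightarrow> real" and \<delta> :: real
  assumes "(\<Sum>i<d. (x i)^2) = 1"
    and "\<delta> > 0"
  shows "measure_pmf.prob (tomography d x \<delta>)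
           {X. linf_norm d (\<lambda>i. X i - x i) < (1 + sqrt 2) * \<delta>}
         \<ge> 1 - 1 / (real d powr 0.83)"
proof -
  have "d \<noteq> 0"
  proof
    assume "d = 0" then show False using assms(1) by simp
  qed
  consider "d = 1" | "d \<ge> 2" using \<open>d \<noteq> 0\<close> by linarith
  then show ?thesis
  proof cases
    case 1
    then show ?thesis by simp
  next
    case 2
    define N where "N = num_copies d \<delta>"
    define L where "L = ln (real d)"
    have L: "L > 0" unfolding L_def using 2 by simp
    have NL: "real N * \<delta>^2 \<ge> 36 * L"
    proof -
      have "36 * L / \<delta>^2 \<le> real N"
        unfolding N_def num_copies_def L_def by (rule real_nat_ceiling_ge)
      then show ?thesis using assms(2) by (simp add: field_simps)
    qed
    have N0: "N > 0"
    proof (rule ccontr)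
      assume "\<not> N > 0" then have "N = 0" by simp
      then show False using NL L by simp
    qed
    define T where "T = tomography d x \<delta>"
    define good where "good = {X. linf_norm d (\<lambda>i. X i - x i) < (1 + sqrt 2) * \<delta>}"
    have sub: "UNIV - good \<subseteq> (\<Union>i\<in>{..<d}. {X. (1 + sqrt 2) * \<delta> \<le> \<bar>X i - x i\<bar>})"
    proof
      fix X assume "X \<in> UNIV - good"
      then have "\<not> Max ((\<lambda>i. \<bar>X i - x i\<bar>) ` {..<d}) < (1 + sqrt 2) * \<delta>"
        unfolding good_def linf_norm_def by simp
      then have "\<exists>i\<in>{..<d}. \<not> \<bar>X i - x i\<bar> < (1 + sqrt 2) * \<delta>"
        using \<open>d \<noteq> 0\<close> by (subst (asm) Max_less_iff) auto
      then show "X \<in> (\<Union>i\<in>{..<d}. {X. (1 + sqrt 2) * \<delta> \<le> \<bar>X i - x i\<bar>})" by (auto simp: not_less)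
    qed
    have ci: "measure_pmf.prob T {X. (1 + sqrt 2) * \<delta> \<le> \<bar>X i - x i\<bar>} \<le> 3 * exp (- (4 * L))"
      if i: "i < d" for i
      unfolding T_def tomography_alt N_def[symmetric]
      by (rule coord_bound[OF assms(1) assms(2) _ NL N0 i]) (use L in simp)
    have "measure_pmf.prob T (UNIV - good)
        \<le> measure_pmf.prob T (\<Union>i\<in>{..<d}. {X. (1 + sqrt 2) * \<delta> \<le> \<bar>X i - x i\<bar>})"
      by (rule measure_pmf.finite_measure_mono[OF sub]) simp
    also have "\<dots> \<le> (\<Sum>i<d. measure_pmf.prob T {X. (1 + sqrt 2) * \<delta> \<le> \<bar>X i - x i\<bar>})"
      by (rule measure_pmf.finite_measure_subadditive_finite) auto
    also have "\<dots> \<le> (\<Sum>i<d. 3 * exp (- (4 * L)))"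
      by (rule sum_mono) (use ci in auto)
    also have "\<dots> = real d * (3 * exp (- (4 * L)))" by simp
    also have "\<dots> \<le> 1 / (real d powr 0.83)" unfolding L_def by (rule final_arith[OF 2])
    finally have bad: "measure_pmf.prob T (UNIV - good) \<le> 1 / (real d powr 0.83)" .
    have "measure_pmf.prob T (UNIV - good) = 1 - measure_pmf.prob T good"
      using measure_pmf.prob_compl[of good T] by simp
    then show ?thesis using bad unfolding T_def good_def by simp
  qed
qed


end
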